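(* If $\beta$ is a real quadratic irrational of conductor $f$, then there exist an integer matrix $B$ with $\det B=f$ and a real quadratic irrational $\alpha$ of conductor $1$ such that $\beta=B\cdot\alpha$.
   Context: For an integer matrix $B=\begin{pmatrix}a&b\\c&d\end{pmatrix}$, $B\cdot\alpha=\frac{a\alpha+b}{c\alpha+d}$. If $\beta$ is a root of $a\beta^2+b\beta+c=0$ with $a,b,c\in\mathbb Z$, $\gcd(a,b,c)=1$, and $b^2-4ac=f^2\Delta_0$ with $\Delta_0$ a fundamental discriminant and $f$ a positive integer, then $f$ is the conductor of $\beta$. *)

theory Defs
  imports Complex_Main "HOL-Computational_Algebra.Squarefree"
begin

definition fundamental_discriminant :: "int \<Rightarrow> bool" where
  "fundamental_discriminant D \<longleftrightarrow>
     (D mod 4 = 1 \<and> squarefree D) \<or>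
     (\<exists>m. D = 4 * m \<and> (m mod 4 = 2 \<or> m mod 4 = 3) \<and> squarefree m)"

definition real_quadratic_irrational :: "real \<Rightarrow> bool" where
  "real_quadratic_irrational x \<longleftrightarrow> x \<notin> \<rat> \<and>
     (\<exists>a b c :: int. a \<noteq> 0 \<and> of_int a * x ^ 2 + of_int b * x + of_int c = 0)"

definition conductor :: "real \<Rightarrow> int \<Rightarrow> bool" where
  "conductor x f \<longleftrightarrow> f > 0 \<and>
     (\<exists>a b c D0 :: int. a \<noteq> 0 \<and> gcd a (gcd b c) = 1 \<and>
        of_int a * x ^ 2 + of_int b * x + of_int c = 0 \<and>
        b ^ 2 - 4 * a * c = f ^ 2 * D0 \<and> fundamental_discriminant D0)"

definition mat_act :: "int \<Rightarrow> int \<Rightarrow> int \<Rightarrow> int \<Rightarrow> real \<Rightarrow> real" where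
  "mat_act a b c d x = (of_int a * x + of_int b) / (of_int c * x + of_int d)"

end

theory Submission
  imports Defs
begin

lemma find_k_odd:
  fixes a b c p E :: int
  assumes p: "prime p" "p \<noteq> 2" and na: "\<not> p dvd a"
    and disc: "b^2 - 4*a*c = p^2 * E"
  shows "\<exists>k. p dvd 2*a*k + b \<and> p^2 dvd a*k^2 + b*k + c"
proof -
  have p2: "\<not> p dvd 2"
  proof
    assume "p dvd 2"
    then have "p \<le> 2" by (simp add: zdvd_imp_le)
    moreover have "p > 1" using p prime_gt_1_int by blast
    ultimately show False using p by simp
  qed
  have "coprime p 2" "coprime p a"
    using prime_imp_coprime[OF p(1) p2] prime_imp_coprime[OF p(1) na] by auto
  then have cop: "coprime p (2*a)" by simp
  obtain u v where uv: "u * (2*a) + v * p = 1"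
    using bezout_int[of "2*a" p] cop by (metis coprime_iff_gcd_eq_1 gcd.commute)
  define k where "k = - b * u"
  have e1: "2*a*k + b = p * (b*v)" using uv unfolding k_def by algebra
  have e2: "4*a*(a*k^2 + b*k + c) = (2*a*k+b)^2 - (b^2 - 4*a*c)" by algebra
  have "4*a*(a*k^2 + b*k + c) = p^2 * ((b*v)^2 - E)"
    using e1 e2 disc by (simp add: power_mult_distrib algebra_simps)
  then have "p^2 dvd 4*a*(a*k^2 + b*k + c)" by simp
  moreover have "coprime (p^2) (4*a)"
  proof -
    have e: "2*(2*a) = 4*a" by simp
    have "coprime p 2" using prime_imp_coprime[OF p(1) p2] .
    from this cop have "coprime p (2*(2*a))" by (metis coprime_mult_right_iff)
    then have "coprime p (4*a)" unfolding e .
    then show ?thesis by simp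
  qed
  ultimately have "p^2 dvd a*k^2 + b*k + c"
    using coprime_dvd_mult_right_iff by (metis mult.assoc)
  then show ?thesis using e1 by (intro exI[of _ k] conjI) (simp_all)
qed

lemma find_k_two:
  fixes a b c E :: int
  assumes na: "\<not> 2 dvd a"
    and disc: "b^2 - 4*a*c = 2^2 * E" and E: "E mod 4 = 0 \<or> E mod 4 = 1"
  shows "\<exists>k. 2 dvd 2*a*k + b \<and> 2^2 dvd a*k^2 + b*k + c"
proof -
  have "b^2 = 2*(2*a*c + 2*E)" using disc by (simp add: algebra_simps)
  then have "even (b^2)" by simp
  then obtain b' where b': "b = 2*b'" by auto
  obtain x where x: "a = 2*x+1" using na by (metis oddE)
  define t :: int where "t = (if E mod 4 = 0 then 0 else 1)"
  define k where "k = - a*b' + t"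
  have e2: "a*(a*k^2 + b*k + c) = (a*k+b')^2 - E"
    using disc b' by (simp add: power2_eq_square algebra_simps)
  have e3: "a*k+b' = a*t - 4*(b'*x*(x+1))"
    unfolding k_def x by (simp add: algebra_simps)
  have "4 dvd (a*k+b')^2 - E"
  proof -
    have "(a*k+b')^2 - E = (a*t)^2 - E + 4*(4*(b'*x*(x+1))^2 - 2*a*t*(b'*x*(x+1)))"
      unfolding e3 by (simp add: power2_eq_square algebra_simps)
    moreover have "4 dvd (a*t)^2 - E"
    proof (cases "E mod 4 = 0")
      case True
      then have "t = 0" unfolding t_def by simp
      then have "(a*t)^2 - E = - E" by simp
      moreover have "4 dvd - E" using True by presburger
      ultimately show ?thesis by metis
    next
      case False
      then have "E mod 4 = 1" using E by simp
      then have "4 dvd 1 - E" by presburger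
      moreover have "(a*t)^2 - E = 4*(x*(x+1)) + (1 - E)" using False unfolding t_def x
        by (simp add: power2_eq_square algebra_simps)
      ultimately show ?thesis by (metis dvd_add dvd_triv_left)
    qed
    ultimately show ?thesis by (metis dvd_add dvd_triv_left)
  qed
  then have "4 dvd a*(a*k^2 + b*k + c)" using e2 by simp
  moreover have "coprime (4::int) a" using na
    by (metis coprime_commute coprime_mult_right_iff coprime_right_2_iff_odd mult_2 numeral_Bit0)
  ultimately have "4 dvd a*k^2 + b*k + c" using coprime_dvd_mult_right_iff by blast
  then show ?thesis using b' by (intro exI[of _ k] conjI) (simp_all)
qed


lemma find_k:
  fixes a b c p E :: int
  assumes p: "prime p" and na: "\<not> p dvd a"
    and disc: "b^2 - 4*a*c = p^2 * E" and E: "E mod 4 = 0 \<or> E mod 4 = 1"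
  shows "\<exists>k. p dvd 2*a*k + b \<and> p^2 dvd a*k^2 + b*k + c"
proof (cases "p = 2")
  case True
  then show ?thesis using find_k_two[of a b c E] na disc E by simp
next
  case False
  show ?thesis using find_k_odd[OF p False na disc] .
qed

lemma sq_mod4:
  fixes m D :: int
  assumes "D mod 4 = 0 \<or> D mod 4 = 1"
  shows "(m^2 * D) mod 4 = 0 \<or> (m^2 * D) mod 4 = 1"
proof -
  have e1: "(m^2 * D) mod 4 = ((m^2 mod 4) * (D mod 4)) mod 4"
    by (simp add: mod_mult_eq)
  have e2: "m^2 mod 4 = ((m mod 4)^2) mod 4" by (simp add: power_mod)
  have "(m^2 * D) mod 4 = ((((m mod 4)^2) mod 4) * (D mod 4)) mod 4" using e1 e2 by simp
  moreover have "m mod 4 \<in> {0,1,2,3}" by auto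
  ultimately show ?thesis using assms by auto
qed

definition Pinv :: "int \<Rightarrow> int \<Rightarrow> real \<Rightarrow> bool" where
  "Pinv D0 m x \<longleftrightarrow> x \<notin> \<rat> \<and> (\<exists>a b c :: int. a \<noteq> 0 \<and> gcd a (gcd b c) = 1 \<and>
     of_int a * x ^ 2 + of_int b * x + of_int c = 0 \<and> b ^ 2 - 4 * a * c = m ^ 2 * D0)"

definition Ginv :: "int \<Rightarrow> int \<Rightarrow> real \<Rightarrow> bool" where
  "Ginv D0 m x \<longleftrightarrow> (\<exists>p q r s :: int. \<exists>y. p * s - q * r = m \<and> Pinv D0 1 y \<and> x = mat_act p q r s y)"

lemma den_nz:
  fixes r s m :: int and y :: real
  assumes "y \<notin> \<rat>" "p * s - q * r = m" "m \<noteq> 0"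
  shows "of_int r * y + of_int s \<noteq> 0"
proof
  assume h: "of_int r * y + of_int s = 0"
  show False
  proof (cases "r = 0")
    case True
    then show False using h assms by simp
  next
    case False
    then have "y = - of_int s / of_int r" using h by (simp add: field_simps)
    then have "y \<in> \<rat>" by simp
    then show False using assms by simp
  qed
qed

lemma step:
  fixes p m D0 a b c :: int and x :: real
  assumes p: "prime p" and m: "m > 0"
    and IH: "\<And>z. Pinv D0 m z \<Longrightarrow> Ginv D0 m z"
    and D0: "D0 mod 4 = 0 \<or> D0 mod 4 = 1"
    and irr: "x \<notin> \<rat>" and a: "a \<noteq> 0" and g: "gcd a (gcd b c) = 1"
    and root: "of_int a * x ^ 2 + of_int b * x + of_int c = 0"
    and disc: "b^2 - 4*a*c = (p*m)^2 * D0"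
    and na: "\<not> p dvd a"
  shows "Ginv D0 (p*m) x"
proof -
  have disc': "b^2 - 4*a*c = p^2 * (m^2 * D0)" using disc by (simp add: power_mult_distrib)
  obtain k where k1: "p dvd 2*a*k + b" and k2: "p^2 dvd a*k^2 + b*k + c"
    using find_k[OF p na disc' sq_mod4[OF D0]] by blast
  obtain b1 where b1: "2*a*k + b = p * b1" using k1 by (auto elim: dvdE)
  obtain c1 where c1: "a*k^2 + b*k + c = p^2 * c1" using k2 by (auto elim: dvdE)
  have p0: "p \<noteq> 0" using p by auto
  define x1 where "x1 = (x - of_int k) / of_int p"
  have xx: "x = of_int p * x1 + of_int k" unfolding x1_def using p0 by simp
  have P1: "Pinv D0 m x1"
  proof -
    have h1: "x1 \<notin> \<rat>"
    proof
      assume "x1 \<in> \<rat>"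
      then have "of_int p * x1 + of_int k \<in> \<rat>" by simp
      then show False using irr xx by simp
    qed
    have "gcd a (gcd b1 c1) dvd a" "gcd a (gcd b1 c1) dvd b1" "gcd a (gcd b1 c1) dvd c1"
      by (meson gcd_dvd1 gcd_dvd2 dvd_trans)+
    then have d: "gcd a (gcd b1 c1) dvd a" "gcd a (gcd b1 c1) dvd b" "gcd a (gcd b1 c1) dvd c"
    proof -
      assume h: "gcd a (gcd b1 c1) dvd a" "gcd a (gcd b1 c1) dvd b1" "gcd a (gcd b1 c1) dvd c1"
      have eb: "b = p * b1 - 2*a*k" using b1 by simp
      have ec: "c = p^2 * c1 - a*k^2 - b*k" using c1 by simp
      show "gcd a (gcd b1 c1) dvd a" by fact
      show hb: "gcd a (gcd b1 c1) dvd b" unfolding eb using h by simp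
      show "gcd a (gcd b1 c1) dvd c" unfolding ec using h hb by simp
    qed
    then have "gcd a (gcd b1 c1) dvd gcd a (gcd b c)" by simp
    then have "gcd a (gcd b1 c1) dvd 1" using g by simp
    then have h3: "gcd a (gcd b1 c1) = 1" by simp
    have "of_int p ^ 2 * (of_int a * x1 ^ 2 + of_int b1 * x1 + of_int c1)
        = of_int a * (of_int p * x1)^2 + of_int (p * b1) * (of_int p * x1) + of_int (p^2 * c1)"
      by (simp add: algebra_simps power2_eq_square)
    also have "\<dots> = of_int a * (x - of_int k)^2 + of_int (2*a*k + b) * (x - of_int k) + of_int (a*k^2 + b*k + c)"
      unfolding b1 c1 using xx by simp
    also have "\<dots> = of_int a * x ^ 2 + of_int b * x + of_int c"
      by (simp add: algebra_simps power2_eq_square)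
    also have "\<dots> = 0" by fact
    finally have h4: "of_int a * x1 ^ 2 + of_int b1 * x1 + of_int c1 = (0::real)" using p0 by simp
    have "p^2 * (b1^2 - 4*a*c1) = (p*b1)^2 - 4*a*(p^2*c1)" by (simp add: algebra_simps power2_eq_square)
    also have "\<dots> = (2*a*k + b)^2 - 4*a*(a*k^2 + b*k + c)" unfolding b1 c1 ..
    also have "\<dots> = b^2 - 4*a*c" by (simp add: algebra_simps power2_eq_square)
    also have "\<dots> = p^2 * (m^2 * D0)" by fact
    finally have h5: "b1^2 - 4*a*c1 = m^2 * D0" using p0 by simp
    show ?thesis unfolding Pinv_def
      by (rule conjI[OF h1], rule exI[of _ a], rule exI[of _ b1], rule exI[of _ c1])
         (intro conjI a h3 h4 h5)
  qed
  obtain p' q' r' s' y where det: "p' * s' - q' * r' = m" and Py: "Pinv D0 1 y"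
    and x1y: "x1 = mat_act p' q' r' s' y"
    using IH[OF P1] unfolding Ginv_def by blast
  have yirr: "y \<notin> \<rat>" using Py unfolding Pinv_def by blast
  have den: "of_int r' * y + of_int s' \<noteq> (0::real)" using den_nz[OF yirr det] m by simp
  show ?thesis unfolding Ginv_def
  proof (intro exI conjI)
    show "(p*p' + k*r') * s' - (p*q' + k*s') * r' = p * m" using det by (simp add: algebra_simps)
    show "Pinv D0 1 y" by fact
    show "x = mat_act (p*p' + k*r') (p*q' + k*s') r' s' y"
      using xx x1y den unfolding mat_act_def by (simp add: field_simps)
  qed
qed


lemma main:
  fixes D0 :: int and n :: nat and x :: real
  assumes D0: "D0 mod 4 = 0 \<or> D0 mod 4 = 1"
  shows "0 < n \<Longrightarrow> Pinv D0 (int n) x \<Longrightarrow> Ginv D0 (int n) x"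
proof (induction n arbitrary: x rule: less_induct)
  case (less n)
  show ?case
  proof (cases "n = 1")
    case True
    then have "Pinv D0 1 x" using less.prems by simp
    moreover have "mat_act 1 0 0 1 x = x" unfolding mat_act_def by simp
    ultimately show ?thesis unfolding Ginv_def True
      by (intro exI[of _ "1::int"] exI[of _ "0::int"] exI[of _ x]) simp
  next
    case False
    obtain p where p: "prime p" "p dvd n" using prime_factor_nat[OF False] by blast
    define m where "m = n div p"
    have nm: "n = p * m" unfolding m_def using p by simp
    have p1: "p > 1" using p prime_gt_1_nat by blast
    have m0: "m > 0" using less.prems nm by (cases "m = 0") auto
    have mn: "m < n" using nm p1 m0 by simp
    have IH: "\<And>z. Pinv D0 (int m) z \<Longrightarrow> Ginv D0 (int m) z"
      using less.IH[OF mn] m0 by blast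
    have pi: "prime (int p)" using p by simp
    have m0': "int m > 0" using m0 by simp
    have nn: "int n = int p * int m" using nm by simp
    obtain a b c where irr: "x \<notin> \<rat>" and a: "a \<noteq> 0" and g: "gcd a (gcd b c) = 1"
      and root: "of_int a * x ^ 2 + of_int b * x + of_int c = 0"
      and disc: "b^2 - 4*a*c = (int p * int m)^2 * D0"
      using less.prems(2) unfolding Pinv_def nn apply (elim conjE exE)
    apply (rule that)
    apply assumption+
    done
    show ?thesis
    proof (cases "int p dvd a")
      case False
      show ?thesis unfolding nn using step[OF pi m0' IH D0 irr a g root disc False] .
    next
      case True
      have nc: "\<not> int p dvd c"
      proof
        assume pc: "int p dvd c"
        have "b^2 = 4*a*c + int p * (int p * int m^2 * D0)" using disc
          by (simp add: power2_eq_square algebra_simps)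
        then have "int p dvd b^2" using True pc by simp
        then have "int p dvd b" using pi prime_dvd_power by blast
        then have "int p dvd gcd a (gcd b c)" using True pc by simp
        then have "int p dvd 1" using g by simp
        then show False using pi by (simp add: prime_int_iff)
      qed
      have x0: "x \<noteq> 0" using irr by auto
      have c0: "c \<noteq> 0"
      proof
        assume "c = 0"
        then have "x * (of_int a * x + of_int b) = 0" using root by (simp add: power2_eq_square algebra_simps)
        then have "of_int a * x + of_int b = 0" using x0 by simp
        then have "x = - of_int b / of_int a" using a by (simp add: field_simps)
        then have "x \<in> \<rat>" by simp
        then show False using irr by simp
      qed
      define y where "y = - 1 / x"
      have y0: "y \<noteq> 0" unfolding y_def using x0 by simp
      have xy: "x = - 1 / y" unfolding y_def using x0 by simp
      have yirr: "y \<notin> \<rat>"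
      proof
        assume "y \<in> \<rat>"
        then have "- 1 / y \<in> \<rat>" by simp
        then show False using irr xy by simp
      qed
      have g': "gcd c (gcd (-b) a) = 1" using g by (simp add: ac_simps)
      have root': "of_int c * y ^ 2 + of_int (-b) * y + of_int a = 0"
      proof -
        have "x^2 * (of_int c * y ^ 2 + of_int (-b) * y + of_int a) = of_int a * x ^ 2 + of_int b * x + of_int c"
          unfolding y_def using x0 by (simp add: field_simps power2_eq_square)
        then show ?thesis using root x0 by simp
      qed
      have disc': "(-b)^2 - 4*c*a = (int p * int m)^2 * D0" using disc by (simp add: algebra_simps)
      have "Ginv D0 (int p * int m) y" using step[OF pi m0' IH D0 yirr c0 g' root' disc' nc] .
      then obtain P Q R S \<alpha> where det: "P * S - Q * R = int p * int m" and Pa: "Pinv D0 1 \<alpha>"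
        and ya: "y = mat_act P Q R S \<alpha>" unfolding Ginv_def by blast
      have airr: "\<alpha> \<notin> \<rat>" using Pa unfolding Pinv_def by blast
      have d1: "of_int R * \<alpha> + of_int S \<noteq> (0::real)" using den_nz[OF airr det] m0 p1 by simp
      have d2: "of_int P * \<alpha> + of_int Q \<noteq> (0::real)"
      proof
        assume "of_int P * \<alpha> + of_int Q = 0"
        then have "y = 0" using ya unfolding mat_act_def by simp
        then show False using y0 by simp
      qed
      show ?thesis unfolding Ginv_def nn
      proof (intro exI conjI)
        show "(- R) * Q - (- S) * P = int p * int m" using det by (simp add: algebra_simps)
        show "Pinv D0 1 \<alpha>" by fact
        show "x = mat_act (- R) (- S) P Q \<alpha>"
          using xy ya d1 d2 unfolding mat_act_def by (simp add: field_simps)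
      qed
    qed
  qed
qed

theorem lemma4p42:
  fixes \<beta> :: real and f :: int
  assumes "real_quadratic_irrational \<beta>" and "conductor \<beta> f"
  shows "\<exists>(a::int) (b::int) (c::int) (d::int) (\<alpha>::real).
           a * d - b * c = f \<and> real_quadratic_irrational \<alpha> \<and> conductor \<alpha> 1 \<and>
           \<beta> = mat_act a b c d \<alpha>"
proof -
  have irr: "\<beta> \<notin> \<rat>" using assms(1) unfolding real_quadratic_irrational_def by blast
  obtain a b c D0 :: int where f0: "f > 0" and a: "a \<noteq> 0" and g: "gcd a (gcd b c) = 1"
    and root: "of_int a * \<beta> ^ 2 + of_int b * \<beta> + of_int c = 0"
    and disc: "b ^ 2 - 4 * a * c = f ^ 2 * D0" and fd: "fundamental_discriminant D0"
    using assms(2) unfolding conductor_def apply (elim conjE exE)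
    apply (rule that)
    apply assumption+
    done
  have D0: "D0 mod 4 = 0 \<or> D0 mod 4 = 1" using fd unfolding fundamental_discriminant_def by auto
  have fn: "int (nat f) = f" using f0 by simp
  have "Pinv D0 (int (nat f)) \<beta>" unfolding Pinv_def fn
    by (rule conjI[OF irr], rule exI[of _ a], rule exI[of _ b], rule exI[of _ c])
       (intro conjI a g root disc)
  moreover have "0 < nat f" using f0 by simp
  ultimately have "Ginv D0 (int (nat f)) \<beta>" using main[OF D0] by blast
  then obtain P Q R S \<alpha> where det: "P * S - Q * R = f" and Pa: "Pinv D0 1 \<alpha>"
    and ba: "\<beta> = mat_act P Q R S \<alpha>" unfolding Ginv_def fn by blast
  obtain A B C where airr: "\<alpha> \<notin> \<rat>" and A: "A \<noteq> 0" and gA: "gcd A (gcd B C) = 1"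
    and rA: "of_int A * \<alpha> ^ 2 + of_int B * \<alpha> + of_int C = 0"
    and dA: "B^2 - 4*A*C = 1^2 * D0" using Pa unfolding Pinv_def apply (elim conjE exE)
    apply (rule that)
    apply assumption+
    done
  have "real_quadratic_irrational \<alpha>" unfolding real_quadratic_irrational_def
    using airr A rA by blast
  moreover have "conductor \<alpha> 1" unfolding conductor_def
    by (rule conjI, simp, rule exI[of _ A], rule exI[of _ B], rule exI[of _ C], rule exI[of _ D0])
       (intro conjI A gA rA dA fd)
  ultimately show ?thesis using det ba by blast
qed

end
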